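(* For every integer $n\ge2$, the coefficient of $u\,v^{n}w^{n-1}$ in $P_{n/(n+1)}(u,v,w)$ (i.e. the coefficient at the lattice point $(1,n)$ of the Newton polygon) equals $4$.
   Context: Markov polynomials. Let $x,y,z$ be indeterminates. Consider the set consisting of all rationals $\rho\in[0,1]$, each written in lowest terms $\rho=a/b$ with integers $a\ge 0$, $b\ge 1$, together with the formal symbol $1/0$. Define Laurent polynomials $M_\rho(x,y,z)$ recursively by $M_{1/0}=y$, $M_{0/1}=x$, $M_{1/1}=\frac{x^2+y^2}{z}$, and: whenever $a/b$, $c/d$ are in this set with $|ad-bc|=1$ and $(a+2c)/(b+2d)\in[0,1]$, then $M_{\frac{a+2c}{b+2d}}=\big(M_{c/d}^2+M_{\frac{a+c}{b+d}}^2\big)/M_{a/b}$. This determines $M_\rho$ for every rational $\rho\in[0,1]$. Numerator. For coprime $1\le a\le b$, $P_{a/b}(u,v,w)$ denotes the homogeneous polynomial of degree $a+b-1$ such that $M_{a/b}(x,y,z)=P_{a/b}(x^2,y^2,z^2)/(x^{a-1}y^{b-1}z^{a+b-1})$; its existence is known. *)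

theory Defs
  imports "HOL-Computational_Algebra.Polynomial" "HOL-Computational_Algebra.Fraction_Field"
begin

(* Polynomials in three variables with integer coefficients are represented as
   nested univariate polynomials  int poly poly poly :
   innermost variable = first variable (x resp. u),
   middle variable    = second variable (y resp. v),
   outer variable     = third variable (z resp. w).
   Laurent polynomials in x,y,z live in the field of fractions  (int poly poly poly) fract. *)

type_synonym poly3 = "int poly poly poly"
type_synonym rat3 = "poly3 fract"

definition varX :: poly3 where "varX = [:[: monom (1::int) 1 :]:]"
definition varY :: poly3 where "varY = [: monom (1::int poly) 1 :]"
definition varZ :: poly3 where "varZ = monom (1::int poly poly) 1"

definition coeff3 :: "poly3 \<Rightarrow> nat \<Rightarrow> nat \<Rightarrow> nat \<Rightarrow> int" where
  "coeff3 P i j k = coeff (coeff (coeff P k) j) i"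

definition frac :: "poly3 \<Rightarrow> rat3" where "frac p = Fract p 1"

definition X :: rat3 where "X = frac varX"
definition Y :: rat3 where "Y = frac varY"
definition Z :: rat3 where "Z = frac varZ"

(* the index set: pairs (a,b) representing a/b in lowest terms with a/b in [0,1], plus 1/0 *)
definition markov_dom :: "(nat \<times> nat) set" where
  "markov_dom = {(a,b). coprime a b \<and> (a \<le> b \<or> (a,b) = (1,0))}"

definition markov_rel :: "(nat \<times> nat \<Rightarrow> rat3) \<Rightarrow> bool" where
  "markov_rel M \<longleftrightarrow>
     M (1,0) = Y \<and> M (0,1) = X \<and> M (1,1) = (X^2 + Y^2) / Z \<and>
     (\<forall>a b c d. (a,b) \<in> markov_dom \<longrightarrow> (c,d) \<in> markov_dom \<longrightarrow>
        \<bar>int a * int d - int b * int c\<bar> = 1 \<longrightarrow> a + 2*c \<le> b + 2*d \<longrightarrow>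
        M (a + 2*c, b + 2*d) = ((M (c,d))^2 + (M (a+c, b+d))^2) / M (a,b)) \<and>
     (\<forall>p. p \<notin> markov_dom \<longrightarrow> M p = 0)"

definition markov_M :: "nat \<times> nat \<Rightarrow> rat3" where
  "markov_M = (THE M. markov_rel M)"

definition sq_subst :: "poly3 \<Rightarrow> poly3" where
  "sq_subst P = (\<Sum>k\<le>degree P. \<Sum>j\<le>degree (coeff P k). \<Sum>i\<le>degree (coeff (coeff P k) j).
      of_int (coeff3 P i j k) * varX^(2*i) * varY^(2*j) * varZ^(2*k))"

definition homogeneous3 :: "poly3 \<Rightarrow> nat \<Rightarrow> bool" where
  "homogeneous3 P N \<longleftrightarrow> (\<forall>i j k. coeff3 P i j k \<noteq> 0 \<longrightarrow> i + j + k = N)"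

definition markov_P :: "nat \<Rightarrow> nat \<Rightarrow> poly3" where
  "markov_P a b = (THE P. homogeneous3 P (a + b - 1) \<and>
      markov_M (a,b) = frac (sq_subst P) / frac (varX^(a-1) * varY^(b-1) * varZ^(a+b-1)))"

end

theory Submission
  imports Defs
begin

definition dec :: "nat \<times> nat \<Rightarrow> nat \<times> nat \<times> nat \<times> nat \<Rightarrow> bool" where
  "dec t x \<longleftrightarrow> (case x of (a,b,c,d) \<Rightarrow> (a,b) \<in> markov_dom \<and> (c,d) \<in> markov_dom \<and>
     \<bar>int a * int d - int b * int c\<bar> = 1 \<and> a + 2*c \<le> b + 2*d \<and> t = (a+2*c, b+2*d))"

lemma detL:
  fixes e1 e2 f1 f2 p q s :: int
  assumes "0 \<le> e1" "e1 \<le> p" "0 \<le> e2" "e2 \<le> q" "0 \<le> f1" "f1 \<le> p" "0 \<le> f2" "f2 \<le> q"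
    "e1*q - e2*p = s" "f1*q - f2*p = s" "\<bar>s\<bar> = 1"
  shows "e1 = f1 \<and> e2 = f2"
proof -
  define g1 where "g1 = e1 - f1"
  define g2 where "g2 = e2 - f2"
  have gg: "g1 * q = g2 * p" using assms(9,10) unfolding g1_def g2_def by (simp add: algebra_simps)
  have ss: "s*s = 1" using assms(11) by (metis abs_mult_self_eq mult_1)
  define k where "k = s * (g2*e1 - g1*e2)"
  have "g1 * s = p * (g2*e1 - g1*e2)"
  proof -
    have "g1 * s = g1*e1*q - g1*e2*p" unfolding assms(9)[symmetric] by (simp add: algebra_simps)
    also have "\<dots> = g2*p*e1 - g1*e2*p" using gg by (metis mult.assoc mult.commute)
    finally show ?thesis by (simp add: algebra_simps)
  qed
  hence k1: "g1 = p * k" unfolding k_def by (metis mult.assoc mult.commute mult_1 ss)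
  have "g2 * s = q * (g2*e1 - g1*e2)"
  proof -
    have "g2 * s = g2*e1*q - g2*e2*p" unfolding assms(9)[symmetric] by (simp add: algebra_simps)
    also have "\<dots> = g2*e1*q - g1*q*e2" using gg by (metis mult.assoc mult.commute)
    finally show ?thesis by (simp add: algebra_simps)
  qed
  hence k2: "g2 = q * k" unfolding k_def by (metis mult.assoc mult.commute mult_1 ss)
  have pq: "p + q > 0"
  proof (rule ccontr)
    assume "\<not> p + q > 0"
    hence "p = 0" "q = 0" using assms by auto
    thus False using assms by auto
  qed
  have kb: "\<bar>k\<bar> * (p+q) \<le> p + q"
  proof -
    have "\<bar>g1\<bar> \<le> p" "\<bar>g2\<bar> \<le> q" unfolding g1_def g2_def using assms by auto
    hence "\<bar>g1\<bar> + \<bar>g2\<bar> \<le> p + q" by simp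
    moreover have "\<bar>g1\<bar> + \<bar>g2\<bar> = \<bar>k\<bar> * (p+q)" using k1 k2 assms
      by (simp add: abs_mult distrib_left mult.commute)
    ultimately show ?thesis by simp
  qed
  hence "\<bar>k\<bar> \<le> 1" using pq by (metis mult_le_cancel_right2 not_less)
  hence "k = 0 \<or> k = 1 \<or> k = -1" by auto
  moreover have "k \<noteq> 1"
  proof
    assume "k = 1"
    hence "e1 = p" "f1 = 0" "e2 = q" "f2 = 0" using k1 k2 assms unfolding g1_def g2_def by auto
    thus False using assms by auto
  qed
  moreover have "k \<noteq> -1"
  proof
    assume "k = -1"
    hence "e1 = 0" "f1 = p" "e2 = 0" "f2 = q" using k1 k2 assms unfolding g1_def g2_def by auto
    thus False using assms by auto
  qed
  ultimately have "k = 0" by blast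
  thus ?thesis using k1 k2 unfolding g1_def g2_def by simp
qed

lemma dec_unique:
  assumes "dec t (a,b,c,d)" "dec t (a',b',c',d')"
  shows "(a,b,c,d) = (a',b',c',d')"
proof -
  define s where "s = int a * int d - int b * int c"
  define s' where "s' = int a' * int d' - int b' * int c'"
  have h: "\<bar>s\<bar> = 1" "\<bar>s'\<bar> = 1" "t = (a+2*c, b+2*d)" "t = (a'+2*c', b'+2*d')"
    using assms unfolding dec_def s_def s'_def by auto
  define p where "p = int (a + 2*c)"
  define q where "q = int (b + 2*d)"
  have p': "p = int (a' + 2*c')" and q': "q = int (b'+2*d')" using h unfolding p_def q_def by auto
  have detc: "int c * q - int d * p = - s" unfolding p_def q_def s_def by (simp add: algebra_simps)
  have detc': "int c' * q - int d' * p = - s'" unfolding p' q' s'_def by (simp add: algebra_simps)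
  have detac: "int (a+c) * q - int (b+d) * p = s" unfolding p_def q_def s_def by (simp add: algebra_simps)
  have detac': "int (a'+c') * q - int (b'+d') * p = s'" unfolding p' q' s'_def by (simp add: algebra_simps)
  have "s = s' \<or> s = - s'" using h by auto
  thus ?thesis
  proof
    assume "s = s'"
    then have "int c = int c' \<and> int d = int d'"
      using detL[of "int c" p "int d" q "int c'" "int d'" "-s"] detc detc' h
      unfolding p_def q_def p' q' by auto
    then show ?thesis using h by auto
  next
    assume ss: "s = - s'"
    then have 1: "int c' = int (a+c) \<and> int d' = int (b+d)"
      using detL[of "int c'" p "int d'" q "int (a+c)" "int (b+d)" "s"] detc' detac h
      unfolding p_def q_def p' q' by auto
    from ss have 2: "int c = int (a'+c') \<and> int d = int (b'+d')"
      using detL[of "int c" p "int d" q "int (a'+c')" "int (b'+d')" "-s"] detc detac' h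
      unfolding p_def q_def p' q' by auto
    from 1 2 have "a = 0" "b = 0" by auto
    then have "s = 0" unfolding s_def by simp
    with h show ?thesis by simp
  qed
qed

lemma coprime_det:
  assumes "\<bar>int a * int d - int b * int c\<bar> = 1"
  shows "coprime a b"
proof (rule coprimeI)
  fix g assume g: "g dvd a" "g dvd b"
  have "int g dvd int a * int d - int b * int c" using g
    by (simp add: dvd_diff)
  hence "int g dvd \<bar>int a * int d - int b * int c\<bar>" by (simp only: dvd_abs_iff)
  with assms have "int g dvd 1" by simp
  thus "is_unit g" by simp
qed

lemma dec_intro:
  fixes a1 a2 c1 c2 p q :: int
  assumes nn: "0 \<le> a1" "0 \<le> a2" "0 \<le> c1" "0 \<le> c2"
    and t: "a1 + 2*c1 = p" "a2 + 2*c2 = q" and det: "\<bar>a1*c2 - a2*c1\<bar> = 1"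
    and pq: "p < q" "2 \<le> q"
  shows "dec (nat p, nat q) (nat a1, nat a2, nat c1, nat c2)"
proof -
  have cop1: "coprime (nat a1) (nat a2)"
    by (rule coprime_det[of _ "nat c2" _ "nat c1"]) (use det nn in simp)
  have det2: "\<bar>int (nat c1) * int (nat a2) - int (nat c2) * int (nat a1)\<bar> = 1"
    using det nn by (simp add: abs_minus_commute algebra_simps)
  have cop2: "coprime (nat c1) (nat c2)" using det2 by (rule coprime_det)
  have detc: "\<bar>c1 * q - c2 * p\<bar> = 1" using det unfolding t[symmetric]
    by (simp add: algebra_simps abs_minus_commute)
  have c12: "c1 \<le> c2"
  proof (rule ccontr)
    assume "\<not> c1 \<le> c2"
    hence "1 \<le> c1 - c2" by simp
    have "c2 * p \<le> c2 * q" using pq nn by (simp add: mult_left_mono)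
    hence "(c1 - c2) * q \<le> c1 * q - c2 * p" by (simp add: algebra_simps)
    moreover have "q \<le> (c1 - c2) * q" using \<open>1 \<le> c1 - c2\<close> pq by simp
    moreover have "c1 * q - c2 * p \<le> 1" using detc by linarith
    ultimately show False using pq by linarith
  qed
  have deta: "\<bar>a1 * q - a2 * p\<bar> = 2" using det unfolding t[symmetric]
    by (simp add: algebra_simps abs_mult[symmetric])
  have a12: "a1 \<le> a2 \<or> (a1 = 1 \<and> a2 = 0)"
  proof (rule ccontr)
    assume H: "\<not> (a1 \<le> a2 \<or> (a1 = 1 \<and> a2 = 0))"
    hence "1 \<le> a1 - a2" by simp
    have "a2 * p \<le> a2 * q" using pq nn by (simp add: mult_left_mono)
    hence 1: "(a1 - a2) * q \<le> a1 * q - a2 * p" by (simp add: algebra_simps)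
    have 2: "q \<le> (a1 - a2) * q" using \<open>1 \<le> a1 - a2\<close> pq by simp
    have "a1 * q - a2 * p \<ge> 2" using 1 2 pq by linarith
    hence e: "a1 * q - a2 * p = 2" using deta by linarith
    have "(a1 - a2) * q \<le> 2" using 1 e by simp
    moreover have "(a1 - a2) * 2 \<le> (a1 - a2) * q" using pq \<open>1 \<le> a1 - a2\<close>
      by (intro mult_left_mono) auto
    ultimately have "(a1 - a2) * 2 \<le> 2" by (rule order_trans[rotated])
    hence "a1 - a2 = 1" using \<open>1 \<le> a1 - a2\<close> by presburger
    with \<open>(a1 - a2) * q \<le> 2\<close> pq have "a1 - a2 = 1 \<and> q = 2" by simp
    hence "a2 * (2 - p) = 0" using e by (simp add: algebra_simps)
    moreover have "2 - p > 0" using pq \<open>a1 - a2 = 1 \<and> q = 2\<close> by simp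
    ultimately have "a2 = 0" by simp
    thus False using H \<open>a1 - a2 = 1 \<and> q = 2\<close> by simp
  qed
  have dom1: "(nat a1, nat a2) \<in> markov_dom" unfolding markov_dom_def using cop1 a12 by auto
  have dom2: "(nat c1, nat c2) \<in> markov_dom" unfolding markov_dom_def using cop2 c12 by auto
  have "\<bar>int (nat a1) * int (nat c2) - int (nat a2) * int (nat c1)\<bar> = 1" using det nn by simp
  moreover have "nat a1 + 2 * nat c1 \<le> nat a2 + 2 * nat c2" using t pq nn by linarith
  moreover have "(nat p, nat q) = (nat a1 + 2 * nat c1, nat a2 + 2 * nat c2)" using t nn by auto
  ultimately show ?thesis unfolding dec_def using dom1 dom2 by simp
qed

lemma dec_exists:
  assumes dom: "(p,q) \<in> markov_dom" and nb: "(p,q) \<noteq> (1,0)" "(p,q) \<noteq> (0,1)" "(p,q) \<noteq> (1,1)"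
  shows "\<exists>x. dec (p,q) x"
proof -
  have cop: "coprime p q" and pq: "p \<le> q" using dom nb unfolding markov_dom_def by auto
  have p1: "1 \<le> p"
  proof (rule ccontr)
    assume "\<not> 1 \<le> p" hence "p = 0" by simp
    with cop have "q = 1" by simp
    with \<open>p = 0\<close> nb show False by simp
  qed
  have pq2: "p < q"
  proof (rule ccontr)
    assume "\<not> p < q" hence "p = q" using pq by simp
    with cop have "p = 1" by simp
    with \<open>p = q\<close> nb show False by simp
  qed
  have q2: "2 \<le> q" using p1 pq2 by simp
  define P where "P = int p"
  define Q where "Q = int q"
  have "gcd P Q = 1" using cop unfolding P_def Q_def by (simp add: coprime_iff_gcd_eq_1)
  then obtain u v where uv: "u * P + v * Q = 1" using bezout_int[of P Q] by auto
  define m where "m = (- u) div Q"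
  define e2 where "e2 = (- u) mod Q"
  have Qp: "Q > 0" using q2 unfolding Q_def by simp
  have e2b: "0 \<le> e2" "e2 < Q" unfolding e2_def using Qp by auto
  have e2d: "e2 = - u - Q * m" unfolding e2_def m_def by (simp add: minus_mult_div_eq_mod[symmetric] algebra_simps)
  define e1 where "e1 = v - m * P"
  have dete: "e1 * Q - e2 * P = 1" unfolding e1_def e2d using uv by (simp add: algebra_simps)
  have Pp: "P \<ge> 1" using p1 unfolding P_def by simp
  have e1p: "e1 > 0"
  proof -
    have "e2 * P \<ge> 0" using e2b Pp by simp
    hence "e1 * Q \<ge> 1" using dete by linarith
    show ?thesis
    proof (rule ccontr)
      assume "\<not> e1 > 0"
      hence "e1 * Q \<le> 0" using Qp by (simp add: mult_nonpos_nonneg)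
      with \<open>e1 * Q \<ge> 1\<close> show False by simp
    qed
  qed
  have e1P: "e1 \<le> P"
  proof -
    have "e2 * P \<le> (Q - 1) * P" using e2b Pp by (intro mult_right_mono) auto
    hence "e1 * Q \<le> P * Q" using dete Pp by (simp add: algebra_simps)
    thus ?thesis using Qp by simp
  qed
  define f1 where "f1 = P - e1"
  define f2 where "f2 = Q - e2"
  have f: "0 \<le> f1" "0 < f2" unfolding f1_def f2_def using e1P e2b by auto
  have detf: "e1 * f2 - e2 * f1 = 1" unfolding f1_def f2_def using dete by (simp add: algebra_simps)
  have PQ: "P < Q" "2 \<le> Q" using pq2 q2 unfolding P_def Q_def by auto
  have tt: "(p,q) = (nat P, nat Q)" unfolding P_def Q_def by simp
  consider "e1 \<le> f1 \<and> e2 \<le> f2" | "f1 \<le> e1 \<and> f2 \<le> e2" | "e1 > f1 \<and> e2 < f2" | "e1 < f1 \<and> e2 > f2"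
    by linarith
  then show ?thesis
  proof cases
    case 1
    have "dec (nat P, nat Q) (nat (f1 - e1), nat (f2 - e2), nat e1, nat e2)"
      apply (rule dec_intro) using 1 e1p e2b PQ detf unfolding f1_def f2_def
      by (auto simp: algebra_simps abs_minus_commute)
    then show ?thesis using tt by auto
  next
    case 2
    have "dec (nat P, nat Q) (nat (e1 - f1), nat (e2 - f2), nat f1, nat f2)"
      apply (rule dec_intro) using 2 f detf PQ unfolding f1_def f2_def
      by (auto simp: algebra_simps)
    then show ?thesis using tt by auto
  next
    case 3
    have "e1 * f2 - e2 * f1 \<ge> (f1 + 1) * (e2 + 1) - e2 * f1"
      using 3 f e2b by (intro diff_right_mono mult_mono) auto
    hence "f1 + e2 + 1 \<le> 1" using detf by (simp add: algebra_simps)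
    hence "f1 = 0" "e2 = 0" using f e2b by auto
    hence "e1 * f2 = 1" using detf by simp
    hence "e1 = 1" "f2 = 1" using e1p f by (simp_all add: pos_zmult_eq_1_iff)
    hence "P = 1" "Q = 1" using \<open>f1 = 0\<close> \<open>e2 = 0\<close> unfolding f1_def f2_def by auto
    with PQ show ?thesis by simp
  next
    case 4
    have "e1 * f2 \<le> f1 * f2" using 4 f by (intro mult_right_mono) auto
    moreover have "f1 * f2 < f1 * e2" using 4 f e1p by (intro mult_strict_left_mono) auto
    ultimately have "e1 * f2 - e2 * f1 < 0" by (simp add: algebra_simps)
    with detf show ?thesis by simp
  qed
qed

lemma dec_props:
  assumes "dec (p,q) (a,b,c,d)"
  shows "(p,q) \<in> markov_dom" "(p,q) \<noteq> (1,0)" "(p,q) \<noteq> (0,1)" "(p,q) \<noteq> (1,1)"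
    "a + b < p + q" "c + d < p + q" "(a+c) + (b+d) < p + q"
proof -
  have h: "\<bar>int a * int d - int b * int c\<bar> = 1" "a + 2*c \<le> b + 2*d" "p = a+2*c" "q = b+2*d"
    using assms unfolding dec_def by auto
  have "\<bar>int p * int d - int q * int c\<bar> = 1" using h by (simp add: algebra_simps)
  hence "coprime p q" by (rule coprime_det)
  thus "(p,q) \<in> markov_dom" using h unfolding markov_dom_def by auto
  have cd: "c + d > 0" using h by (cases "c + d = 0") auto
  show "(p,q) \<noteq> (1,0)" using h by (cases "b = 0 \<and> d = 0") auto
  show "(p,q) \<noteq> (0,1)" using h by (cases "a = 0 \<and> c = 0") auto
  show "(p,q) \<noteq> (1,1)"
  proof
    assume "(p,q) = (1,1)"
    hence "a + 2*c = 1" "b + 2*d = 1" using h by auto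
    hence "a = 1" "c = 0" "b = 1" "d = 0" by arith+
    thus False using h by simp
  qed
  show "a + b < p + q" "c + d < p + q" "(a+c) + (b+d) < p + q" using h cd by auto
qed

lemma dec_rel:
  assumes "markov_rel M" "dec t (a,b,c,d)"
  shows "M t = ((M (c,d))^2 + (M (a+c,b+d))^2) / M (a,b)"
  using assms unfolding markov_rel_def dec_def by auto

definition Fm :: "(nat \<times> nat \<Rightarrow> rat3) \<Rightarrow> nat \<times> nat \<Rightarrow> rat3" where
  "Fm f t = (if t = (1,0) then Y else if t = (0,1) then X else if t = (1,1) then (X^2+Y^2)/Z
     else if (\<exists>x. dec t x) then (case (SOME x. dec t x) of (a,b,c,d) \<Rightarrow>
        ((f (c,d))^2 + (f (a+c,b+d))^2) / f (a,b)) else 0)"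

definition Mfun :: "nat \<times> nat \<Rightarrow> rat3" where
  "Mfun = wfrec (measure (\<lambda>(p,q). p+q)) Fm"

lemma Mfun_eq: "Mfun t = Fm (cut Mfun (measure (\<lambda>(p,q). p+q)) t) t"
  unfolding Mfun_def by (rule wfrec) simp

lemma Mfun_dec:
  assumes d: "dec t (a,b,c,d)"
  shows "Mfun t = ((Mfun (c,d))^2 + (Mfun (a+c,b+d))^2) / Mfun (a,b)"
proof -
  obtain p q where t: "t = (p,q)" by fastforce
  note pr = dec_props[OF d[unfolded t]]
  have ex: "\<exists>x. dec t x" using d by blast
  have "(SOME x. dec t x) = (a,b,c,d)"
  proof -
    obtain a' b' c' d' where e: "(SOME x. dec t x) = (a',b',c',d')" by (metis prod.exhaust)
    have "dec t (SOME x. dec t x)" using ex by (rule someI_ex)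
    with e have "dec t (a',b',c',d')" by simp
    with d have "(a,b,c,d) = (a',b',c',d')" by (rule dec_unique)
    with e show ?thesis by simp
  qed
  moreover have "((c,d), t) \<in> measure (\<lambda>(p,q). p+q)" "((a+c,b+d), t) \<in> measure (\<lambda>(p,q). p+q)"
     "((a,b), t) \<in> measure (\<lambda>(p,q). p+q)" using pr t by auto
  ultimately show ?thesis
    apply (subst Mfun_eq)
    unfolding Fm_def using pr ex t by (auto simp add: cut_apply)
qed

lemma Mfun_rel: "markov_rel Mfun"
proof -
  have b1: "Mfun (1,0) = Y" by (subst Mfun_eq) (simp add: Fm_def)
  have b2: "Mfun (0,1) = X" by (subst Mfun_eq) (simp add: Fm_def)
  have b3: "Mfun (1,1) = (X^2+Y^2)/Z" by (subst Mfun_eq) (simp add: Fm_def)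
  have nd: "Mfun p = 0" if "p \<notin> markov_dom" for p
  proof -
    have "\<not> (\<exists>x. dec p x)" using that dec_props(1) by (metis prod.exhaust)
    moreover have "p \<noteq> (1,0)" "p \<noteq> (0,1)" "p \<noteq> (1,1)" using that unfolding markov_dom_def by auto
    ultimately show ?thesis by (subst Mfun_eq) (simp add: Fm_def)
  qed
  have eq: "Mfun (a + 2*c, b + 2*d) = ((Mfun (c,d))^2 + (Mfun (a+c, b+d))^2) / Mfun (a,b)"
    if "(a,b) \<in> markov_dom" "(c,d) \<in> markov_dom" "\<bar>int a * int d - int b * int c\<bar> = 1"
       "a + 2*c \<le> b + 2*d" for a b c d
    using that by (intro Mfun_dec) (simp add: dec_def)
  show ?thesis unfolding markov_rel_def using b1 b2 b3 nd eq by blast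
qed

lemma rel_unique:
  assumes "markov_rel M1" "markov_rel M2"
  shows "M1 t = M2 t"
proof (induct t rule: measure_induct_rule[of "\<lambda>(p,q). p+q"])
  case (less t)
  obtain p q where t: "t = (p,q)" by fastforce
  show ?case
  proof (cases "t \<in> markov_dom")
    case False
    then show ?thesis using assms t unfolding markov_rel_def by auto
  next
    case True
    show ?thesis
    proof (cases "t = (1,0) \<or> t = (0,1) \<or> t = (1,1)")
      case True
      then show ?thesis using assms t unfolding markov_rel_def by auto
    next
      case False
      then obtain x where "dec (p,q) x" using dec_exists \<open>t \<in> markov_dom\<close> t by blast
      then obtain a b c d where d: "dec (p,q) (a,b,c,d)" by (metis prod.exhaust)
      note pr = dec_props[OF d]
      show ?thesis
        unfolding t dec_rel[OF assms(1) d] dec_rel[OF assms(2) d]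
        using less pr t by auto
    qed
  qed
qed

lemma markov_M_rel: "markov_rel markov_M"
proof -
  have "\<exists>!M. markov_rel M"
    using Mfun_rel rel_unique by (metis ext)
  thus ?thesis unfolding markov_M_def by (rule theI')
qed


definition is_hom :: "('a::comm_ring_1 \<Rightarrow> 'b::comm_ring_1) \<Rightarrow> bool" where
  "is_hom f \<longleftrightarrow> (\<forall>a b. f (a+b) = f a + f b) \<and> (\<forall>a b. f (a*b) = f a * f b) \<and> f 1 = 1"

lemma hom_add: "is_hom f \<Longrightarrow> f (a+b) = f a + f b" unfolding is_hom_def by blast
lemma hom_mult: "is_hom f \<Longrightarrow> f (a*b) = f a * f b" unfolding is_hom_def by blast
lemma hom_one: "is_hom f \<Longrightarrow> f 1 = 1" unfolding is_hom_def by blast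
lemma hom_zero: "is_hom f \<Longrightarrow> f 0 = 0"
proof -
  assume h: "is_hom f"
  have "f (0+0) = f 0 + f 0" by (rule hom_add[OF h])
  thus ?thesis by simp
qed
lemma hom_uminus: "is_hom f \<Longrightarrow> f (- a) = - f a"
proof -
  assume h: "is_hom f"
  have "f (a + - a) = f a + f (- a)" by (rule hom_add[OF h])
  hence "f a + f (- a) = 0" using hom_zero[OF h] by simp
  thus ?thesis by (subst eq_commute, subst neg_eq_iff_add_eq_0) simp
qed
lemma hom_diff: "is_hom f \<Longrightarrow> f (a - b) = f a - f b"
  using hom_add[of f a "-b"] hom_uminus[of f b] by simp
lemma hom_power: "is_hom f \<Longrightarrow> f (a ^ n) = f a ^ n"
  by (induct n) (simp_all add: hom_one hom_mult)
lemma hom_numeral: "is_hom f \<Longrightarrow> f (numeral n) = numeral n"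
proof (induct n)
  case One then show ?case by (simp add: hom_one)
next
  case (Bit0 n) then show ?case using hom_add[of f "numeral n" "numeral n"] by (simp add: numeral_Bit0)
next
  case (Bit1 n) then show ?case using hom_add[of f "numeral n" "numeral n"] hom_add[of f "numeral n + numeral n" 1]
    by (simp add: numeral_Bit1 hom_one)
qed
lemma hom_of_int_val: "is_hom f \<Longrightarrow> f (of_int n) = of_int n"
proof -
  assume h: "is_hom f"
  have "f (of_nat m) = of_nat m" for m by (induct m) (simp_all add: hom_zero[OF h] hom_add[OF h] hom_one[OF h])
  thus ?thesis by (cases n rule: int_cases2) (simp_all add: hom_uminus[OF h])
qed
lemma hom_sum: "is_hom f \<Longrightarrow> f (sum g A) = sum (\<lambda>x. f (g x)) A"
  using sum_comp_morphism[of f g A] hom_zero hom_add by (metis comp_apply sum.cong)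

lemma hom_comp: "is_hom f \<Longrightarrow> is_hom g \<Longrightarrow> is_hom (f \<circ> g)"
  unfolding is_hom_def by simp

lemma hom_poly: "is_hom (\<lambda>p. poly p x)"
  unfolding is_hom_def by simp

lemma hom_of_int: "is_hom of_int"
  unfolding is_hom_def by simp

lemma map_poly_add_hom:
  assumes "is_hom f" shows "map_poly f (p + q) = map_poly f p + map_poly f q"
  by (rule poly_eqI) (simp add: coeff_map_poly hom_zero[OF assms] hom_add[OF assms])

lemma map_poly_mult_hom:
  assumes h: "is_hom f" shows "map_poly f (p * q) = map_poly f p * map_poly f q"
proof (induct p)
  case 0 then show ?case by simp
next
  case (pCons a p)
  have "map_poly f (pCons a p * q) = map_poly f (smult a q) + map_poly f (pCons 0 (p*q))"
    by (simp add: map_poly_add_hom[OF h])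
  also have "\<dots> = smult (f a) (map_poly f q) + pCons 0 (map_poly f p * map_poly f q)"
    using pCons by (simp add: map_poly_smult map_poly_pCons hom_zero[OF h] hom_mult[OF h])
  also have "\<dots> = map_poly f (pCons a p) * map_poly f q"
    by (simp add: map_poly_pCons hom_zero[OF h])
  finally show ?case .
qed

lemma hom_map_poly: "is_hom f \<Longrightarrow> is_hom (map_poly f)"
  unfolding is_hom_def[of "map_poly f"]
  by (simp add: map_poly_add_hom map_poly_mult_hom hom_one)

lemma hom_frac: "is_hom frac"
  unfolding is_hom_def frac_def by (simp add: One_fract_def)

definition ev1 :: "int poly \<Rightarrow> poly3" where "ev1 = (\<lambda>r. poly r (varX^2)) \<circ> map_poly of_int"
definition ev2 :: "int poly poly \<Rightarrow> poly3" where "ev2 = (\<lambda>q. poly q (varY^2)) \<circ> map_poly ev1"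
definition ev :: "poly3 \<Rightarrow> poly3" where "ev = (\<lambda>q. poly q (varZ^2)) \<circ> map_poly ev2"

lemma hom_ev1: "is_hom ev1" unfolding ev1_def by (intro hom_comp hom_poly hom_map_poly hom_of_int)
lemma hom_ev2: "is_hom ev2" unfolding ev2_def by (intro hom_comp hom_poly hom_map_poly hom_ev1)
lemma hom_ev: "is_hom ev" unfolding ev_def by (intro hom_comp hom_poly hom_map_poly hom_ev2)

lemma ev_monom3: "ev (monom (monom (monom c i) j) k) = of_int c * varX^(2*i) * varY^(2*j) * varZ^(2*k)"
proof -
  have "ev (monom (monom (monom c i) j) k) = ((of_int c * (varX^2)^i) * (varY^2)^j) * (varZ^2)^k"
    unfolding ev_def ev2_def ev1_def
    by (simp add: map_poly_monom hom_zero[OF hom_ev2] hom_zero[OF hom_ev1] poly_monom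
     ev2_def ev1_def)
  thus ?thesis by (simp add: power_mult)
qed

lemma monom3_eq: "monom (monom (monom c i) j) k = of_int c * varX^i * varY^j * varZ^k"
  unfolding varX_def varY_def varZ_def
  by (simp add: monom_0[symmetric] monom_power mult_monom of_int_poly)

lemma poly3_expand:
  "P = (\<Sum>k\<le>degree P. \<Sum>j\<le>degree (coeff P k). \<Sum>i\<le>degree (coeff (coeff P k) j).
      monom (monom (monom (coeff3 P i j k) i) j) k)"
proof -
  have "P = (\<Sum>k\<le>degree P. monom (coeff P k) k)" by (simp add: poly_as_sum_of_monoms)
  also have "\<dots> = (\<Sum>k\<le>degree P. \<Sum>j\<le>degree (coeff P k). monom (monom (coeff (coeff P k) j) j) k)"
  proof (rule sum.cong[OF refl])
    fix k
    show "monom (coeff P k) k = (\<Sum>j\<le>degree (coeff P k). monom (monom (coeff (coeff P k) j) j) k)"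
      by (subst monom_sum[symmetric]) (simp add: poly_as_sum_of_monoms)
  qed
  also have "\<dots> = (\<Sum>k\<le>degree P. \<Sum>j\<le>degree (coeff P k). \<Sum>i\<le>degree (coeff (coeff P k) j).
      monom (monom (monom (coeff3 P i j k) i) j) k)"
  proof (rule sum.cong[OF refl], rule sum.cong[OF refl])
    fix k j
    show "monom (monom (coeff (coeff P k) j) j) k = (\<Sum>i\<le>degree (coeff (coeff P k) j).
      monom (monom (monom (coeff3 P i j k) i) j) k)"
      by (subst monom_sum[symmetric], subst monom_sum[symmetric]) (simp add: poly_as_sum_of_monoms coeff3_def)
  qed
  finally show ?thesis .
qed

lemma sq_subst_ev: "sq_subst P = ev P"
proof -
  have "ev P = (\<Sum>k\<le>degree P. \<Sum>j\<le>degree (coeff P k). \<Sum>i\<le>degree (coeff (coeff P k) j).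
      ev (monom (monom (monom (coeff3 P i j k) i) j) k))"
    by (subst poly3_expand) (simp add: hom_sum[OF hom_ev])
  thus ?thesis unfolding sq_subst_def by (simp add: ev_monom3)
qed

lemma coeff3_monom3: "coeff3 (monom (monom (monom x i) j) k) a b c = (if i = a \<and> j = b \<and> k = c then x else 0)"
  unfolding coeff3_def by auto

lemma coeff3_sum: "coeff3 (sum g A) a b c = (\<Sum>x\<in>A. coeff3 (g x) a b c)"
  unfolding coeff3_def by (simp add: coeff_sum)

lemma coeff3_add: "coeff3 (P + Q) a b c = coeff3 P a b c + coeff3 Q a b c"
  unfolding coeff3_def by simp
lemma coeff3_diff: "coeff3 (P - Q) a b c = coeff3 P a b c - coeff3 Q a b c"
  unfolding coeff3_def by simp

lemma triple_delta:
  assumes "finite A" "\<And>k. finite (B k)" "\<And>k j. finite (C k j)"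
  shows "(\<Sum>k\<in>A. \<Sum>j\<in>B k. \<Sum>i\<in>C k j. if i = a \<and> j = b \<and> k = c then f i j k else 0)
     = (if c \<in> A \<and> b \<in> B c \<and> a \<in> C c b then f a b c else 0)"
proof -
  have 1: "(\<Sum>i\<in>C k j. if i = a \<and> j = b \<and> k = c then f i j k else 0) =
    (if j = b \<and> k = c then (if a \<in> C k j then f a j k else 0) else 0)" for k j
    using assms by (cases "j = b \<and> k = c") (auto simp: sum.delta intro!: sum.neutral)
  have 2: "(\<Sum>j\<in>B k. if j = b \<and> k = c then (if a \<in> C k j then f a j k else 0) else 0) =
    (if k = c then (if b \<in> B k \<and> a \<in> C k b then f a b k else 0) else 0)" for k
    using assms by (cases "k = c") (auto simp: sum.delta intro!: sum.neutral)
  show ?thesis using assms by (simp add: 1 2 sum.delta)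
qed

lemma ev_expand: "ev P = (\<Sum>k\<le>degree P. \<Sum>j\<le>degree (coeff P k). \<Sum>i\<le>degree (coeff (coeff P k) j).
      monom (monom (monom (coeff3 P i j k) (2*i)) (2*j)) (2*k))"
  by (simp add: sq_subst_ev[symmetric] sq_subst_def monom3_eq)

lemma coeff3_zero: "coeff3 P a b c \<noteq> 0 \<Longrightarrow> c \<le> degree P \<and> b \<le> degree (coeff P c) \<and> a \<le> degree (coeff (coeff P c) b)"
  unfolding coeff3_def by (metis coeff_0 coeff_eq_0 not_le_imp_less)

lemma coeff_ev: "coeff3 (ev P) (2*a) (2*b) (2*c) = coeff3 P a b c"
proof -
  have "coeff3 (ev P) (2*a) (2*b) (2*c) = (\<Sum>k\<le>degree P. \<Sum>j\<le>degree (coeff P k). \<Sum>i\<le>degree (coeff (coeff P k) j).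
      if i = a \<and> j = b \<and> k = c then coeff3 P i j k else 0)"
    by (subst ev_expand) (simp add: coeff3_sum coeff3_monom3)
  also have "\<dots> = (if c \<le> degree P \<and> b \<le> degree (coeff P c) \<and> a \<le> degree (coeff (coeff P c) b) then coeff3 P a b c else 0)"
    by (subst triple_delta) auto
  also have "\<dots> = coeff3 P a b c" using coeff3_zero[of P a b c] by auto
  finally show ?thesis .
qed

lemma poly3_eqI: "(\<And>a b c. coeff3 P a b c = coeff3 Q a b c) \<Longrightarrow> P = Q"
  unfolding coeff3_def by (intro poly_eqI) blast

lemma ev_inj: "ev P = ev Q \<Longrightarrow> P = Q"
  by (rule poly3_eqI) (metis coeff_ev)


lemma coeff3_mult: "coeff3 (P*Q) i j k =
  (\<Sum>a\<le>k. \<Sum>b\<le>j. \<Sum>c\<le>i. coeff3 P c b a * coeff3 Q (i-c) (j-b) (k-a))"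
  by (simp only: coeff3_def coeff_mult coeff_sum)

lemma sum_nz: "sum g A \<noteq> 0 \<Longrightarrow> \<exists>x\<in>A. g x \<noteq> 0"
  by (meson sum.neutral)

lemma homog_mult:
  assumes "homogeneous3 P m" "homogeneous3 Q n"
  shows "homogeneous3 (P*Q) (m+n)"
  unfolding homogeneous3_def
proof (intro allI impI)
  fix i j k assume nz: "coeff3 (P*Q) i j k \<noteq> 0"
  obtain a where a: "a \<le> k" "(\<Sum>b\<le>j. \<Sum>c\<le>i. coeff3 P c b a * coeff3 Q (i-c) (j-b) (k-a)) \<noteq> 0"
    using sum_nz[OF nz[unfolded coeff3_mult]] by auto
  obtain b where b: "b \<le> j" "(\<Sum>c\<le>i. coeff3 P c b a * coeff3 Q (i-c) (j-b) (k-a)) \<noteq> 0"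
    using sum_nz[OF a(2)] by auto
  obtain c where c: "c \<le> i" "coeff3 P c b a * coeff3 Q (i-c) (j-b) (k-a) \<noteq> 0"
    using sum_nz[OF b(2)] by auto
  have "coeff3 P c b a \<noteq> 0" "coeff3 Q (i-c) (j-b) (k-a) \<noteq> 0" using c(2) by auto
  hence "c + b + a = m" "(i-c) + (j-b) + (k-a) = n" using assms unfolding homogeneous3_def by blast+
  thus "i + j + k = m + n" using a b c by linarith
qed

lemma one_monom: "(1::poly3) = monom (monom (monom 1 0) 0) 0" by (simp add: monom_0 one_pCons)

lemma homog_add: "homogeneous3 P m \<Longrightarrow> homogeneous3 Q m \<Longrightarrow> homogeneous3 (P+Q) m"
  unfolding homogeneous3_def coeff3_add by (metis add.right_neutral)
lemma homog_diff: "homogeneous3 P m \<Longrightarrow> homogeneous3 Q m \<Longrightarrow> homogeneous3 (P-Q) m"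
  unfolding homogeneous3_def coeff3_diff by (metis diff_zero)
lemma homog_power: "homogeneous3 P m \<Longrightarrow> homogeneous3 (P^n) (n*m)"
proof (induct n)
  case 0
  show ?case unfolding homogeneous3_def power_0 one_monom coeff3_monom3 by auto
next
  case (Suc n) then show ?case using homog_mult[of P m "P^n" "n*m"] by (simp add: add.commute)
qed

lemma varX_monom: "varX = monom (monom (monom 1 1) 0) 0" using monom3_eq[of 1 1 0 0] by simp
lemma varY_monom: "varY = monom (monom (monom 1 0) 1) 0" using monom3_eq[of 1 0 1 0] by simp
lemma varZ_monom: "varZ = monom (monom (monom 1 0) 0) 1" using monom3_eq[of 1 0 0 1] by simp
lemma homog_X: "homogeneous3 varX 1" unfolding homogeneous3_def varX_monom coeff3_monom3 by auto
lemma homog_Y: "homogeneous3 varY 1" unfolding homogeneous3_def varY_monom coeff3_monom3 by auto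
lemma homog_Z: "homogeneous3 varZ 1" unfolding homogeneous3_def varZ_monom coeff3_monom3 by auto
lemma homog_one: "homogeneous3 1 0" unfolding homogeneous3_def one_monom coeff3_monom3 by auto

definition Aq :: poly3 where "Aq = (varX + varY) * (varX + varY + varZ)"
definition Bq :: poly3 where "Bq = varX * varY * varZ^2"

fun Pk :: "nat \<Rightarrow> poly3" where
  "Pk 0 = 1"
| "Pk (Suc 0) = varX * varZ + (varX + varY)^2"
| "Pk (Suc (Suc k)) = Aq * Pk (Suc k) - Bq * Pk k"

lemma homog_Aq: "homogeneous3 Aq 2"
  unfolding Aq_def using homog_mult[OF homog_add[OF homog_X homog_Y] homog_add[OF homog_add[OF homog_X homog_Y] homog_Z]]
  by (simp add: eval_nat_numeral)
lemma homog_Bq: "homogeneous3 Bq 4"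
  unfolding Bq_def using homog_mult[OF homog_mult[OF homog_X homog_Y] homog_power[OF homog_Z, of 2]]
  by (simp add: eval_nat_numeral)

lemma homog_Pk: "homogeneous3 (Pk k) (2*k)"
proof (induct k rule: Pk.induct)
  case 1 then show ?case using homog_one by simp
next
  case 2
  have "homogeneous3 (varX * varZ) 2" using homog_mult[OF homog_X homog_Z] by (simp add: eval_nat_numeral)
  moreover have "homogeneous3 ((varX + varY)^2) 2" using homog_power[OF homog_add[OF homog_X homog_Y], of 2] by (simp add: eval_nat_numeral)
  ultimately show ?case by (simp add: homog_add)
next
  case (3 k)
  have a: "homogeneous3 (Aq * Pk (Suc k)) (2 + 2 * Suc k)" using homog_mult[OF homog_Aq 3(1)] by simp
  have b: "homogeneous3 (Bq * Pk k) (4 + 2 * k)" using homog_mult[OF homog_Bq 3(2)] by simp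
  have e: "2 + 2 * Suc k = 2 * Suc (Suc k)" "4 + 2 * k = 2 * Suc (Suc k)" by simp_all
  show ?case using homog_diff[OF a[unfolded e] b[unfolded e]] by simp
qed

definition E1 :: "poly3 \<Rightarrow> int" where
  "E1 = (\<lambda>P. poly P 1) \<circ> map_poly ((\<lambda>q. poly q 1) \<circ> map_poly (\<lambda>r. poly r (1::int)))"

lemma hom_E1: "is_hom E1" unfolding E1_def by (intro hom_comp hom_poly hom_map_poly)

lemma E1_monom3: "E1 (monom (monom (monom c i) j) k) = c"
proof -
  have h0: "((\<lambda>q. poly q 1) \<circ> map_poly (\<lambda>r. poly r (1::int))) 0 = 0" by simp
  show ?thesis unfolding E1_def by (simp add: map_poly_monom poly_monom h0)
qed

lemma E1_vals: "E1 varX = 1" "E1 varY = 1" "E1 varZ = 1"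
  unfolding varX_monom varY_monom varZ_monom E1_monom3 by simp_all

lemma E1_Aq: "E1 Aq = 6"
  unfolding Aq_def by (simp only: hom_mult[OF hom_E1] hom_add[OF hom_E1] E1_vals; simp)
lemma E1_Bq: "E1 Bq = 1"
  unfolding Bq_def by (simp only: hom_mult[OF hom_E1] hom_power[OF hom_E1] E1_vals; simp)

lemma E1_Pk: "E1 (Pk (Suc (Suc k))) = 6 * E1 (Pk (Suc k)) - E1 (Pk k)"
   "E1 (Pk 0) = 1" "E1 (Pk (Suc 0)) = 5"
proof -
  show "E1 (Pk (Suc (Suc k))) = 6 * E1 (Pk (Suc k)) - E1 (Pk k)"
    by (simp only: Pk.simps hom_diff[OF hom_E1] hom_mult[OF hom_E1] E1_Aq E1_Bq; simp)
  show "E1 (Pk 0) = 1" by (simp add: hom_one[OF hom_E1])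
  show "E1 (Pk (Suc 0)) = 5"
    by (simp only: Pk.simps hom_add[OF hom_E1] hom_mult[OF hom_E1] hom_power[OF hom_E1] E1_vals; simp)
qed

lemma E1_Pk_pos: "1 \<le> E1 (Pk k) \<and> E1 (Pk k) \<le> E1 (Pk (Suc k))"
proof (induct k)
  case 0 then show ?case by (simp only: E1_Pk; simp)
next
  case (Suc k) then show ?case by (simp only: E1_Pk; simp)
qed

lemma Pk_nz: "Pk k \<noteq> 0"
  using E1_Pk_pos[of k] hom_zero[OF hom_E1] by auto


definition fe :: "poly3 \<Rightarrow> rat3" where "fe = frac \<circ> ev"
lemma hom_fe: "is_hom fe" unfolding fe_def by (intro hom_comp hom_frac hom_ev)

lemma ev_vals: "ev varX = varX^2" "ev varY = varY^2" "ev varZ = varZ^2"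
  unfolding varX_monom varY_monom varZ_monom ev_monom3 by (simp_all add: monom3_eq)

lemma fe_vals: "fe varX = X^2" "fe varY = Y^2" "fe varZ = Z^2"
  unfolding fe_def X_def Y_def Z_def by (simp_all add: ev_vals hom_power[OF hom_frac])

lemma frac_eq0: "frac p = 0 \<longleftrightarrow> p = 0"
  unfolding frac_def by (simp add: Zero_fract_def eq_fract)

lemma XYZ_nz: "X \<noteq> 0" "Y \<noteq> 0" "Z \<noteq> 0"
  unfolding X_def Y_def Z_def frac_eq0 varX_monom varY_monom varZ_monom
  by (auto simp: monom_eq_0_iff)

definition sK :: "nat \<Rightarrow> rat3" where "sK k = fe (Pk k)"

definition AQ :: rat3 where "AQ = (X^2 + Y^2) * (X^2 + Y^2 + Z^2)"
definition BQ :: rat3 where "BQ = X^2 * Y^2 * (Z^2)^2"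

lemma sK_rec: "sK (Suc (Suc k)) = AQ * sK (Suc k) - BQ * sK k"
  unfolding sK_def AQ_def BQ_def
  by (simp only: Pk.simps Aq_def Bq_def hom_diff[OF hom_fe] hom_mult[OF hom_fe] hom_add[OF hom_fe] hom_power[OF hom_fe] fe_vals)

lemma sK_01: "sK 0 = 1" "sK (Suc 0) = X^2 * Z^2 + (X^2 + Y^2)^2"
  unfolding sK_def
  by (simp_all only: Pk.simps hom_one[OF hom_fe] hom_mult[OF hom_fe] hom_add[OF hom_fe] hom_power[OF hom_fe] fe_vals)

lemma sK_nz: "sK k \<noteq> 0"
proof
  assume "sK k = 0"
  hence "ev (Pk k) = ev 0" unfolding sK_def fe_def using hom_zero[OF hom_ev] by (simp add: frac_eq0)
  hence "Pk k = 0" by (rule ev_inj)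
  with Pk_nz show False by blast
qed

definition NN :: "nat \<Rightarrow> rat3" where
  "NN k = (X^2 + Y^2)^2 * (X^2)^k * (Y^2)^(k+1) * (Z^2)^(2*k+1)"

lemma inv_step:
  fixes A B s0 s1 s2 s3 :: "'a::comm_ring_1"
  assumes "s3 = A*s2 - B*s1" "s2 = A*s1 - B*s0"
  shows "s3*s1 - s2^2 = B*(s2*s0 - s1^2)"
  unfolding assms(1) unfolding assms(2) by (simp add: algebra_simps power2_eq_square)

lemma sK_inv: "sK (Suc (Suc k)) * sK k - (sK (Suc k))^2 = NN k"
proof (induct k)
  case 0
  show ?case unfolding sK_rec sK_01 NN_def AQ_def BQ_def by (simp add: algebra_simps power2_eq_square)
next
  case (Suc k)
  have "sK (Suc (Suc (Suc k))) * sK (Suc k) - (sK (Suc (Suc k)))^2 = BQ * NN k"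
    using inv_step[OF sK_rec sK_rec] Suc by simp
  also have "\<dots> = NN (Suc k)" unfolding BQ_def NN_def by (simp add: power_add algebra_simps)
  finally show ?case .
qed

definition WW :: rat3 where "WW = (X^2 + Y^2) / Z"
definition DD :: "nat \<Rightarrow> rat3" where "DD k = X^k * Y^(k+1) * (Z^2)^(k+1)"

lemma DD_nz: "DD k \<noteq> 0" unfolding DD_def using XYZ_nz by simp

lemma NN_DD: "NN j = WW^2 * (DD j)^2"
proof -
  have z: "(Z^2)^(2*j+2) = Z^2 * (Z^2)^(2*j+1)" by simp
  have "WW^2 * (DD j)^2 = ((X^2 + Y^2)^2 / Z^2) * ((X^2)^j * (Y^2)^(j+1) * (Z^2)^(2*j+2))"
    unfolding WW_def DD_def by (simp add: power_mult_distrib power_divide power_mult[symmetric] mult.commute)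
  also have "\<dots> = NN j" unfolding z NN_def using XYZ_nz by (simp add: field_simps)
  finally show ?thesis by simp
qed

lemma DD_DD: "DD (Suc (Suc k)) * DD k = (DD (Suc k))^2"
  unfolding DD_def by (simp add: power_mult_distrib power_add algebra_simps power2_eq_square)

lemma fstep:
  fixes s1 s2 s3 W d0 d1 d2 :: "'a::field"
  assumes "s1 \<noteq> 0" "d0 \<noteq> 0" "d1 \<noteq> 0" "d2 \<noteq> 0"
    "s3 * s1 = s2^2 + W^2 * d1^2" "d2 * d0 = d1^2"
  shows "(W^2 + (s2/d1)^2) / (s1/d0) = s3/d2"
proof -
  have e3: "s3 = (s2^2 + W^2*d1^2)/s1" using assms by (simp add: field_simps)
  have e2: "d2 = d1^2/d0" using assms by (simp add: field_simps)
  show ?thesis unfolding e3 e2 using assms(1-3) by (simp add: field_simps power2_eq_square)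
qed

lemma M_rel_all: "\<forall>a b c d. (a,b) \<in> markov_dom \<longrightarrow> (c,d) \<in> markov_dom \<longrightarrow>
        \<bar>int a * int d - int b * int c\<bar> = 1 \<longrightarrow> a + 2*c \<le> b + 2*d \<longrightarrow>
        markov_M (a + 2*c, b + 2*d) = ((markov_M (c,d))^2 + (markov_M (a+c, b+d))^2) / markov_M (a,b)"
  using markov_M_rel unfolding markov_rel_def by blast

lemma M_base: "markov_M (1,0) = Y" "markov_M (0,1) = X" "markov_M (1,1) = WW"
  using markov_M_rel unfolding markov_rel_def WW_def by auto

lemma M_12: "markov_M (1,2) = (X^2 + WW^2) / Y"
proof -
  have d: "(1::nat,0::nat) \<in> markov_dom" "(0::nat,1::nat) \<in> markov_dom" unfolding markov_dom_def by auto
  show ?thesis using M_rel_all[rule_format, OF d] M_base by (simp add: numeral_2_eq_2)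
qed

lemma M_step: "markov_M (k+2, k+3) = (WW^2 + (markov_M (k+1,k+2))^2) / markov_M (k,k+1)"
proof -
  have "coprime k (k+1)" by (rule coprime_det[of k 1 "k+1" 1]) simp
  hence d: "(k,k+1) \<in> markov_dom" "(1::nat,1::nat) \<in> markov_dom" unfolding markov_dom_def by auto
  have "markov_M (k + 2*1, k+1 + 2*1) = ((markov_M (1,1))^2 + (markov_M (k+1, k+1+1))^2) / markov_M (k,k+1)"
    by (rule M_rel_all[rule_format, OF d]) auto
  thus ?thesis using M_base by (simp add: numeral_3_eq_3 add.commute)
qed

lemma M_closed: "markov_M (Suc k, Suc (Suc k)) = sK (Suc k) / DD k"
proof -
  have "markov_M (Suc k, Suc (Suc k)) = sK (Suc k) / DD k \<and>
        markov_M (Suc (Suc k), Suc (Suc (Suc k))) = sK (Suc (Suc k)) / DD (Suc k)"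
  proof (induct k)
    case 0
    have p0: "markov_M (Suc 0, Suc (Suc 0)) = sK (Suc 0) / DD 0"
      using M_12 XYZ_nz unfolding sK_01 DD_def WW_def by (simp add: field_simps power2_eq_square numeral_2_eq_2)
    have "markov_M (0+2, 0+3) = (WW^2 + (markov_M (0+1,0+2))^2) / markov_M (0,0+1)" by (rule M_step)
    hence "markov_M (2,3) = (WW^2 + (sK (Suc 0) / DD 0)^2) / (sK 0 / (1/X))"
      using p0 M_base by (simp add: sK_01 numeral_2_eq_2)
    also have "\<dots> = sK (Suc (Suc 0)) / DD (Suc 0)"
    proof (rule fstep)
      show "sK 0 \<noteq> 0" "1/X \<noteq> 0" "DD 0 \<noteq> 0" "DD (Suc 0) \<noteq> 0" using sK_nz DD_nz XYZ_nz by auto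
      show "sK (Suc (Suc 0)) * sK 0 = (sK (Suc 0))^2 + WW^2 * (DD 0)^2"
        using sK_inv[of 0] NN_DD[of 0] by (simp add: algebra_simps)
      show "DD (Suc 0) * (1/X) = (DD 0)^2" unfolding DD_def using XYZ_nz by (simp add: field_simps power2_eq_square)
    qed
    finally show ?case using p0 by (simp add: numeral_2_eq_2 numeral_3_eq_3)
  next
    case (Suc k)
    have "markov_M (k+3, k+4) = (WW^2 + (markov_M (k+2,k+3))^2) / markov_M (k+1,k+2)"
      using M_step[of "Suc k"] by (simp add: eval_nat_numeral)
    also have "\<dots> = (WW^2 + (sK (Suc (Suc k)) / DD (Suc k))^2) / (sK (Suc k) / DD k)"
      using Suc by (simp add: numeral_2_eq_2 numeral_3_eq_3)
    also have "\<dots> = sK (Suc (Suc (Suc k))) / DD (Suc (Suc k))"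
    proof (rule fstep)
      show "sK (Suc k) \<noteq> 0" "DD k \<noteq> 0" "DD (Suc k) \<noteq> 0" "DD (Suc (Suc k)) \<noteq> 0" using sK_nz DD_nz by auto
      show "sK (Suc (Suc (Suc k))) * sK (Suc k) = (sK (Suc (Suc k)))^2 + WW^2 * (DD (Suc k))^2"
        using sK_inv[of "Suc k"] NN_DD[of "Suc k"] by (simp add: algebra_simps)
      show "DD (Suc (Suc k)) * DD k = (DD (Suc k))^2" by (rule DD_DD)
    qed
    finally show ?case using Suc by (simp add: numeral_2_eq_2 numeral_3_eq_3 eval_nat_numeral)
  qed
  thus ?thesis by blast
qed


lemma markov_P_eq: "markov_P (Suc k) (Suc (Suc k)) = Pk (Suc k)"
proof -
  have den0: "frac (varX^(Suc k - 1) * varY^(Suc (Suc k) - 1) * varZ^(Suc k + Suc (Suc k) - 1)) =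
     X^k * Y^(k+1) * Z^(Suc k + Suc (Suc k) - 1)"
    unfolding X_def Y_def Z_def by (simp add: hom_mult[OF hom_frac] hom_power[OF hom_frac] mult_2 power2_eq_square)
  have ee: "Suc k + Suc (Suc k) - 1 = 2*(k+1)" by simp
  have "Z^(Suc k + Suc (Suc k) - 1) = (Z^2)^(k+1)" by (simp only: ee power_mult)
  hence den: "frac (varX^(Suc k - 1) * varY^(Suc (Suc k) - 1) * varZ^(Suc k + Suc (Suc k) - 1)) = DD k"
    unfolding den0 DD_def by simp
  have fr: "frac (sq_subst P) = fe P" for P unfolding fe_def sq_subst_ev by simp
  have deg: "Suc k + Suc (Suc k) - 1 = 2 * Suc k" by simp
  show ?thesis unfolding markov_P_def
  proof (rule the_equality)
    show "homogeneous3 (Pk (Suc k)) (Suc k + Suc (Suc k) - 1) \<and>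
      markov_M (Suc k, Suc (Suc k)) = frac (sq_subst (Pk (Suc k))) /
        frac (varX ^ (Suc k - 1) * varY ^ (Suc (Suc k) - 1) * varZ ^ (Suc k + Suc (Suc k) - 1))"
      unfolding deg[symmetric] den fr using homog_Pk[of "Suc k"] M_closed[of k] deg
      by (simp add: sK_def mult_2)
  next
    fix P assume "homogeneous3 P (Suc k + Suc (Suc k) - 1) \<and>
      markov_M (Suc k, Suc (Suc k)) = frac (sq_subst P) /
        frac (varX ^ (Suc k - 1) * varY ^ (Suc (Suc k) - 1) * varZ ^ (Suc k + Suc (Suc k) - 1))"
    hence "sK (Suc k) / DD k = fe P / DD k" unfolding den fr M_closed by simp
    hence "fe P = fe (Pk (Suc k))" using DD_nz[of k] unfolding sK_def by simp
    hence "frac (ev P - ev (Pk (Suc k))) = 0" unfolding fe_def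
      by (simp add: hom_diff[OF hom_frac])
    hence "ev P = ev (Pk (Suc k))" by (simp add: frac_eq0)
    thus "P = Pk (Suc k)" by (rule ev_inj)
  qed
qed

lemma coeff3_monom_mult:
  "coeff3 (monom (monom (monom x a0) b0) c0 * P) i j k =
    (if a0 \<le> i \<and> b0 \<le> j \<and> c0 \<le> k then x * coeff3 P (i-a0) (j-b0) (k-c0) else 0)"
proof -
  have "coeff3 (monom (monom (monom x a0) b0) c0 * P) i j k =
    (\<Sum>a\<le>k. \<Sum>b\<le>j. \<Sum>c\<le>i. if c = a0 \<and> b = b0 \<and> a = c0 then x * coeff3 P (i-c) (j-b) (k-a) else 0)"
    unfolding coeff3_mult coeff3_monom3 by (intro sum.cong refl) auto
  also have "\<dots> = (if a0 \<le> i \<and> b0 \<le> j \<and> c0 \<le> k then x * coeff3 P (i-a0) (j-b0) (k-c0) else 0)"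
    by (subst triple_delta) auto
  finally show ?thesis .
qed

lemma Qform: "\<exists>T. Pk (Suc k) = varY^(k+2) * (varY + varZ)^k + varX * T"
proof (induct k)
  case 0
  show ?case by (rule exI[of _ "varZ + varX + 2 * varY"]) (simp add: algebra_simps power2_eq_square)
next
  case (Suc k)
  then obtain T where T: "Pk (Suc k) = varY^(k+2) * (varY + varZ)^k + varX * T" by blast
  have "Pk (Suc (Suc k)) = varY^(k+3) * (varY + varZ)^(Suc k) +
     varX * ((2*varY + varZ + varX) * (varY^(k+2) * (varY + varZ)^k) + Aq * T - varY * varZ^2 * Pk k)"
    by (simp add: T Aq_def Bq_def algebra_simps power2_eq_square eval_nat_numeral)
  thus ?case by (auto simp: eval_nat_numeral)
qed

lemma Dform: "\<exists>H S. Pk (Suc (Suc k)) = varY^(k+3) * (varY + varZ)^(k+1) +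
    varX * varY^(k+2) * (4 * varZ^(k+1) + varY * H) + varX^2 * S"
proof (induct k)
  case 0
  show ?case
    apply (rule exI[of _ 4])
    apply (rule exI[of _ "varZ^2 + 5*varY*varZ + 6*varY^2 + 2*varX*varZ + 4*varX*varY + varX^2"])
    by (simp add: Aq_def Bq_def algebra_simps power2_eq_square eval_nat_numeral)
next
  case (Suc k)
  then obtain H S where HS: "Pk (Suc (Suc k)) = varY^(k+3) * (varY + varZ)^(k+1) +
    varX * varY^(k+2) * (4 * varZ^(k+1) + varY * H) + varX^2 * S" by blast
  obtain T where T: "Pk (Suc k) = varY^(k+2) * (varY + varZ)^k + varX * T" using Qform by blast
  define p where "p = varY^(k+2)"
  define q where "q = (varY + varZ)^k"
  define r where "r = varZ^(k+1)"
  have HS': "Pk (Suc (Suc k)) = varY * p * ((varY + varZ) * q) + varX * p * (4 * r + varY * H) + varX^2 * S"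
    unfolding HS p_def q_def r_def by (simp add: algebra_simps eval_nat_numeral del: Pk.simps)
  have T': "Pk (Suc k) = p * q + varX * T" unfolding T p_def q_def by simp
  define H' where "H' = 4 * r + (varY + varZ) * H + (2*varY + 3*varZ) * q"
  define R where "R = p * (4 * r + varY * H)"
  define Q where "Q = varY * p * ((varY + varZ) * q)"
  define S' where "S' = varY * (varY + varZ) * S + (2*varY + varZ) * R + Q + varX * ((2*varY + varZ) * S + R)
     + varX^2 * S - varY * varZ^2 * T"
  have "Pk (Suc (Suc (Suc k))) = varY^2 * p * ((varY + varZ)^2 * q) + varX * (varY * p) * (4 * (varZ * r) + varY * H')
      + varX^2 * S'"
    unfolding Pk.simps(3)[of "Suc k"] HS' T' Aq_def Bq_def H'_def S'_def R_def Q_def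
    by (simp add: algebra_simps power2_eq_square)
  moreover have "varY^2 * p = varY^(Suc k + 3)" "(varY + varZ)^2 * q = (varY + varZ)^(Suc k + 1)"
     "varY * p = varY^(Suc k + 2)" "varZ * r = varZ^(Suc k + 1)"
    unfolding p_def q_def r_def by (simp_all add: power_add eval_nat_numeral)
  ultimately show ?case by (metis mult.assoc)
qed

lemma coeff_main: "coeff3 (Pk (Suc (Suc k))) 1 (k+2) (k+1) = 4"
proof -
  obtain H S where HS: "Pk (Suc (Suc k)) = varY^(k+3) * (varY + varZ)^(k+1) +
    varX * varY^(k+2) * (4 * varZ^(k+1) + varY * H) + varX^2 * S" using Dform by blast
  have m1: "varY^(k+3) = monom (monom (monom 1 0) (k+3)) 0" by (subst monom3_eq) simp
  have m2: "varX * varY^(k+2) = monom (monom (monom 1 1) (k+2)) 0" by (subst monom3_eq) simp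
  have m3: "4 * varZ^(k+1) = monom (monom (monom 4 0) 0) (k+1)" by (subst monom3_eq) simp
  have m4: "varY = monom (monom (monom 1 0) 1) 0" by (subst monom3_eq) simp
  have m5: "varX^2 = monom (monom (monom 1 2) 0) 0" by (subst monom3_eq) simp
  have c1: "coeff3 (varY^(k+3) * (varY + varZ)^(k+1)) 1 (k+2) (k+1) = 0"
    unfolding m1 coeff3_monom_mult by simp
  have c3: "coeff3 (varX^2 * S) 1 (k+2) (k+1) = 0"
    unfolding m5 coeff3_monom_mult by simp
  have c4: "coeff3 (varY * H) 0 0 (k+1) = 0"
    unfolding m4 coeff3_monom_mult by simp
  have c5: "coeff3 (4 * varZ^(k+1)) 0 0 (k+1) = 4"
    unfolding m3 coeff3_monom3 by simp
  have c2: "coeff3 (varX * varY^(k+2) * (4 * varZ^(k+1) + varY * H)) 1 (k+2) (k+1) = 4"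
    unfolding m2 coeff3_monom_mult using c4 c5 by (simp add: coeff3_add)
  show ?thesis unfolding HS coeff3_add c1 c2 c3 by simp
qed

theorem theorem9p1:
  fixes n :: nat
  assumes "n \<ge> 2"
  shows "coeff3 (markov_P n (n+1)) 1 n (n-1) = 4"
proof -
  obtain k where k: "n = Suc (Suc k)" using assms by (metis add_2_eq_Suc le_Suc_ex)
  have "markov_P n (n+1) = Pk (Suc (Suc k))" unfolding k using markov_P_eq[of "Suc k"] by simp
  moreover have "n = k + 2" "n - 1 = k + 1" using k by simp_all
  ultimately show ?thesis using coeff_main[of k] by simp
qed

end
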